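(* Let $G$ be a group with identity $e$, $A$ a finite set with $|A|\ge2$, $S\subseteq G$ finite with $e\in S$ and $|S|\ge2$. Suppose $(\mathcal P,f)$ generates a local map $\mu:A^S\to A$. If $e$ is not essential for $\mu$, then $|\mathcal P|=|A|^{|S|}-|A|^{|S|-1}$.
   Context: $A^S$ is the set of functions $S\to A$. For $s\in S$, $\mathrm{Res}_s(z)=z|_{S\setminus\{s\}}$. An element $s\in S$ is essential for $\mu$ if there exist $z,w\in A^S$ with $\mathrm{Res}_s(z)=\mathrm{Res}_s(w)$ but $\mu(z)\neq\mu(w)$. The pair $(\mathcal P,f)$ generates $\mu$ if $\mathcal P=\{z\in A^S:\mu(z)\neq z(e)\}$ and $f:\mathcal P\to A$ is the restriction of $\mu$ to $\mathcal P$. *)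

theory Defs
  imports "HOL-Algebra.Group" "HOL-Library.FuncSet"
begin

definition Res :: "'g set \<Rightarrow> 'g \<Rightarrow> ('g \<Rightarrow> 'a) \<Rightarrow> ('g \<Rightarrow> 'a)" where
  "Res S s z = restrict z (S - {s})"

definition essential :: "'g set \<Rightarrow> 'a set \<Rightarrow> (('g \<Rightarrow> 'a) \<Rightarrow> 'a) \<Rightarrow> 'g \<Rightarrow> bool" where
  "essential S A \<mu> s \<longleftrightarrow>
     (\<exists>z \<in> S \<rightarrow>\<^sub>E A. \<exists>w \<in> S \<rightarrow>\<^sub>E A. Res S s z = Res S s w \<and> \<mu> z \<noteq> \<mu> w)"

definition generates :: "'g set \<Rightarrow> 'a set \<Rightarrow> 'g \<Rightarrow> (('g \<Rightarrow> 'a) \<Rightarrow> 'a)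
    \<Rightarrow> ('g \<Rightarrow> 'a) set \<Rightarrow> (('g \<Rightarrow> 'a) \<Rightarrow> 'a) \<Rightarrow> bool" where
  "generates S A e \<mu> P f \<longleftrightarrow>
     P = {z \<in> S \<rightarrow>\<^sub>E A. \<mu> z \<noteq> z e} \<and> f = restrict \<mu> P"

end

theory Submission
  imports Defs
begin

theorem mainTheorem8:
  fixes G (structure)
    and A :: "'a set" and S :: "'g set"
    and \<mu> :: "('g \<Rightarrow> 'a) \<Rightarrow> 'a"
    and P :: "('g \<Rightarrow> 'a) set" and f :: "('g \<Rightarrow> 'a) \<Rightarrow> 'a"
  assumes "group G"
    and "finite A" and "card A \<ge> 2"
    and "S \<subseteq> carrier G" and "finite S" and "\<one> \<in> S" and "card S \<ge> 2"
    and "\<mu> \<in> (S \<rightarrow>\<^sub>E A) \<rightarrow> A"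
    and "generates S A \<one> \<mu> P f"
    and "\<not> essential S A \<mu> \<one>"
  shows "card P = card A ^ card S - card A ^ (card S - 1)"
proof -
  let ?e = "\<one>"
  let ?T = "S - {?e}"
  define Q where "Q = {z \<in> S \<rightarrow>\<^sub>E A. \<mu> z = z ?e}"
  have ne: "\<And>z w. z \<in> S \<rightarrow>\<^sub>E A \<Longrightarrow> w \<in> S \<rightarrow>\<^sub>E A \<Longrightarrow> Res S ?e z = Res S ?e w \<Longrightarrow> \<mu> z = \<mu> w"
    using assms(10) unfolding essential_def by blast
  have P: "P = (S \<rightarrow>\<^sub>E A) - Q" using assms(9) unfolding generates_def Q_def by auto
  have QS: "Q \<subseteq> S \<rightarrow>\<^sub>E A" unfolding Q_def by auto
  have fin: "finite (S \<rightarrow>\<^sub>E A)" using assms(2,5) by (simp add: finite_PiE)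
  have bij: "bij_betw (Res S ?e) Q (?T \<rightarrow>\<^sub>E A)"
  proof (rule bij_betwI')
    fix z w assume z: "z \<in> Q" and w: "w \<in> Q"
    show "(Res S ?e z = Res S ?e w) = (z = w)"
    proof
      assume r: "Res S ?e z = Res S ?e w"
      have "\<mu> z = \<mu> w" using ne[OF _ _ r] z w unfolding Q_def by auto
      hence ee: "z ?e = w ?e" using z w unfolding Q_def by auto
      show "z = w"
      proof
        fix x
        show "z x = w x"
        proof (cases "x \<in> S")
          case True
          then show ?thesis
          proof (cases "x = ?e")
            case False
            with True have "Res S ?e z x = Res S ?e w x" using r by simp
            with True False show ?thesis unfolding Res_def by simp
          qed (use ee in simp)
        next
          case False
          then show ?thesis using z w unfolding Q_def by (auto simp: PiE_def extensional_def)
        qed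
      qed
    qed simp
  next
    fix z assume "z \<in> Q"
    thus "Res S ?e z \<in> ?T \<rightarrow>\<^sub>E A" unfolding Q_def Res_def by auto
  next
    fix r assume r: "r \<in> ?T \<rightarrow>\<^sub>E A"
    obtain a where a: "a \<in> A" using assms(3) by (metis card.empty ex_in_conv not_numeral_le_zero)
    define z0 where "z0 = r(?e := a)"
    have z0: "z0 \<in> S \<rightarrow>\<^sub>E A" using r a assms(6) unfolding z0_def by (auto simp: PiE_def extensional_def Pi_def)
    define v where "v = \<mu> z0"
    have v: "v \<in> A" using assms(8) z0 unfolding v_def by auto
    define z where "z = r(?e := v)"
    have z: "z \<in> S \<rightarrow>\<^sub>E A" using r v assms(6) unfolding z_def by (auto simp: PiE_def extensional_def Pi_def)
    have rz: "Res S ?e z = r" using r unfolding z_def Res_def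
      by (auto simp: PiE_def extensional_def restrict_def fun_eq_iff)
    have rz0: "Res S ?e z0 = r" using r unfolding z0_def Res_def
      by (auto simp: PiE_def extensional_def restrict_def fun_eq_iff)
    have "\<mu> z = v" using ne[OF z z0] rz rz0 v_def by simp
    hence "z \<in> Q" using z unfolding Q_def z_def by simp
    thus "\<exists>z\<in>Q. r = Res S ?e z" using rz by auto
  qed
  have cQ: "card Q = card A ^ (card S - 1)"
    using bij_betw_same_card[OF bij] assms(5,6) by (simp add: card_PiE)
  have cS: "card (S \<rightarrow>\<^sub>E A) = card A ^ card S" by (simp add: card_PiE assms(5))
  show ?thesis unfolding P using card_Diff_subset[OF finite_subset[OF QS fin] QS] cQ cS by simp
qed

end
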